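(* Let $\mathcal{A}=(Q,\delta,I,F)$ be a complete Büchi automaton with delayed simulation $\preceq_{\mathit{de}}$, and let $p,q,r\in Q$, $a\in\Sigma$ be such that $q\in\delta(r,a)$ and $p\preceq_{\mathit{de}}q$. Let $\mathcal{A}'=(Q,\delta',I,F)$ where $\delta'=\delta\cup\{r\xrightarrow{a}p\}$. Then $\preceq_{\mathit{de}}$ is included in the delayed simulation on $\mathcal{A}'$.
   Context: A Büchi automaton is $\mathcal{A}=(Q,\delta,I,F)$ over a finite alphabet $\Sigma$ with $\delta:Q\times\Sigma\to2^Q$, complete if $\delta(q,a)\ne\emptyset$ always; $r\xrightarrow{a}p\in\delta$ means $p\in\delta(r,a)$, and $\delta\cup\{r\xrightarrow{a}p\}$ denotes the transition function obtained by adding $p$ to $\delta(r,a)$. Delayed simulation on a BA: in the game from $(p_0,r_0)$, in round $i$ Spoiler picks a transition $p_i\xrightarrow{\alpha_i}p_{i+1}$ of the automaton and Duplicator answers with a transition $r_i\xrightarrow{\alpha_i}r_{i+1}$ on the same symbol; a Duplicator strategy is a map $\sigma$ with $\sigma(r,p\xrightarrow{a}p')$ a successor of $r$ under $a$ (no lookahead). Duplicator wins if for all $i$, $p_i\in F$ implies $r_k\in F$ for some $k\ge i$. The delayed simulation relates $(p,r)$ iff Duplicator has a winning strategy from $(p,r)$. *)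

theory Defs
  imports Main
begin

definition is_BA :: "'q set \<Rightarrow> ('q \<Rightarrow> 'a::finite \<Rightarrow> 'q set) \<Rightarrow> 'q set \<Rightarrow> 'q set \<Rightarrow> bool" where
  "is_BA Q \<delta> I F \<longleftrightarrow> finite Q \<and> I \<subseteq> Q \<and> F \<subseteq> Q \<and> (\<forall>q\<in>Q. \<forall>a. \<delta> q a \<subseteq> Q)"

definition complete_BA :: "'q set \<Rightarrow> ('q \<Rightarrow> 'a::finite \<Rightarrow> 'q set) \<Rightarrow> bool" where
  "complete_BA Q \<delta> \<longleftrightarrow> (\<forall>q\<in>Q. \<forall>a. \<delta> q a \<noteq> {})"

definition add_trans :: "('q \<Rightarrow> 'a \<Rightarrow> 'q set) \<Rightarrow> 'q \<Rightarrow> 'a \<Rightarrow> 'q \<Rightarrow> ('q \<Rightarrow> 'a \<Rightarrow> 'q set)" where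
  "add_trans \<delta> r a p = (\<lambda>s b. if s = r \<and> b = a then insert p (\<delta> s b) else \<delta> s b)"

text \<open>A Duplicator strategy: sigma r (p, a, p') is Duplicator's answer from r to Spoiler's move p --a--> p'.\<close>
definition legal_strategy :: "'q set \<Rightarrow> ('q \<Rightarrow> 'a \<Rightarrow> 'q set) \<Rightarrow> ('q \<Rightarrow> 'q \<times> 'a \<times> 'q \<Rightarrow> 'q) \<Rightarrow> bool" where
  "legal_strategy Q \<delta> \<sigma> \<longleftrightarrow>
     (\<forall>r\<in>Q. \<forall>p\<in>Q. \<forall>a. \<forall>p'\<in>\<delta> p a. \<sigma> r (p, a, p') \<in> \<delta> r a)"

fun dup_run :: "('q \<Rightarrow> 'q \<times> 'a \<times> 'q \<Rightarrow> 'q) \<Rightarrow> 'q \<Rightarrow> (nat \<Rightarrow> 'q) \<Rightarrow> (nat \<Rightarrow> 'a) \<Rightarrow> nat \<Rightarrow> 'q" where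
  "dup_run \<sigma> r0 ps as 0 = r0"
| "dup_run \<sigma> r0 ps as (Suc i) = \<sigma> (dup_run \<sigma> r0 ps as i) (ps i, as i, ps (Suc i))"

definition spoiler_run :: "('q \<Rightarrow> 'a \<Rightarrow> 'q set) \<Rightarrow> 'q \<Rightarrow> (nat \<Rightarrow> 'q) \<Rightarrow> (nat \<Rightarrow> 'a) \<Rightarrow> bool" where
  "spoiler_run \<delta> p0 ps as \<longleftrightarrow> ps 0 = p0 \<and> (\<forall>i. ps (Suc i) \<in> \<delta> (ps i) (as i))"

definition delayed_win :: "'q set \<Rightarrow> (nat \<Rightarrow> 'q) \<Rightarrow> (nat \<Rightarrow> 'q) \<Rightarrow> bool" where
  "delayed_win F ps rs \<longleftrightarrow> (\<forall>i. ps i \<in> F \<longrightarrow> (\<exists>k\<ge>i. rs k \<in> F))"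

definition delayed_sim :: "'q set \<Rightarrow> ('q \<Rightarrow> 'a \<Rightarrow> 'q set) \<Rightarrow> 'q set \<Rightarrow> ('q \<times> 'q) set" where
  "delayed_sim Q \<delta> F = {(p, r). p \<in> Q \<and> r \<in> Q \<and>
     (\<exists>\<sigma>. legal_strategy Q \<delta> \<sigma> \<and>
        (\<forall>ps as. spoiler_run \<delta> p ps as \<longrightarrow> delayed_win F ps (dup_run \<sigma> r ps as)))}"

end

theory Submission
  imports Defs
begin


definition rsim :: "('q \<Rightarrow> 'a \<Rightarrow> 'q set) \<Rightarrow> 'q set \<Rightarrow> ('q \<times> 'q \<times> bool) set \<Rightarrow> ('q \<times> 'q \<times> bool \<Rightarrow> nat) \<Rightarrow> bool" where
  "rsim d F W \<rho> \<longleftrightarrow> (\<forall>P U b a P'. (P,U,b) \<in> W \<longrightarrow> P' \<in> d P a \<longrightarrow>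
     (\<exists>U'\<in>d U a. (P', U', (b \<or> P' \<in> F) \<and> U' \<notin> F) \<in> W \<and> (b \<and> U' \<notin> F \<longrightarrow> \<rho> (P',U',True) < \<rho> (P,U,True))))"

definition wit :: "('q \<Rightarrow> 'a \<Rightarrow> 'q set) \<Rightarrow> 'q set \<Rightarrow> ('q \<times> 'q \<times> bool) set \<Rightarrow> ('q \<times> 'q \<times> bool \<Rightarrow> nat) \<Rightarrow> 'q \<Rightarrow> 'q \<Rightarrow> bool \<Rightarrow> 'a \<Rightarrow> 'q \<Rightarrow> 'q" where
  "wit d F W \<rho> P U b a P' = (SOME U'. U' \<in> d U a \<and> (P', U', (b \<or> P' \<in> F) \<and> U' \<notin> F) \<in> W \<and> (b \<and> U' \<notin> F \<longrightarrow> \<rho> (P',U',True) < \<rho> (P,U,True)))"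

lemma wit_prop:
  assumes "rsim d F W \<rho>" "(P,U,b) \<in> W" "P' \<in> d P a"
  defines "U' \<equiv> wit d F W \<rho> P U b a P'"
  shows "U' \<in> d U a \<and> (P', U', (b \<or> P' \<in> F) \<and> U' \<notin> F) \<in> W \<and> (b \<and> U' \<notin> F \<longrightarrow> \<rho> (P',U',True) < \<rho> (P,U,True))"
proof -
  from assms(1-3) obtain V where "V \<in> d U a \<and> (P', V, (b \<or> P' \<in> F) \<and> V \<notin> F) \<in> W \<and> (b \<and> V \<notin> F \<longrightarrow> \<rho> (P',V,True) < \<rho> (P,U,True))"
    unfolding rsim_def by blast
  then show ?thesis unfolding U'_def wit_def by (rule someI)
qed

lemma no_inf_desc: "(\<And>j. (g (Suc j) :: nat) < g j) \<Longrightarrow> False"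
proof -
  assume h: "\<And>j. g (Suc j) < g j"
  have "g j + j \<le> g 0" for j
  proof (induction j)
    case (Suc j) then show ?case using h[of j] by simp
  qed simp
  from this[of "Suc (g 0)"] show False by simp
qed

definition strat :: "('q \<Rightarrow> 'a \<Rightarrow> 'q set) \<Rightarrow> 'q set \<Rightarrow> ('q \<times> 'q \<times> bool) set \<Rightarrow> ('q \<times> 'q \<times> bool \<Rightarrow> nat) \<Rightarrow> 'q \<Rightarrow> 'q \<times> 'a \<times> 'q \<Rightarrow> 'q" where
  "strat d F W \<rho> r m = (case m of (P,a,P') \<Rightarrow>
     if P' \<in> d P a \<and> (P,r,True) \<in> W then wit d F W \<rho> P r True a P'
     else if P' \<in> d P a \<and> (P,r,False) \<in> W then wit d F W \<rho> P r False a P'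
     else (SOME U'. U' \<in> d r a))"

lemma lemmaR:
  assumes rs: "rsim d F W \<rho>" and cpl: "complete_BA Q d"
    and sQ: "s \<in> Q" and tQ: "t \<in> Q" and init: "(s, t, s \<in> F \<and> t \<notin> F) \<in> W"
  shows "(s,t) \<in> delayed_sim Q d F"
proof -
  define \<sigma> where "\<sigma> = strat d F W \<rho>"
  have legal: "legal_strategy Q d \<sigma>"
    unfolding legal_strategy_def
  proof (intro ballI allI)
    fix r P a P' assume "r \<in> Q" "P \<in> Q" "P' \<in> d P a"
    show "\<sigma> r (P, a, P') \<in> d r a"
    proof (cases "(P,r,True) \<in> W")
      case True then show ?thesis using wit_prop[OF rs True \<open>P' \<in> d P a\<close>] \<open>P' \<in> d P a\<close>
        by (simp add: \<sigma>_def strat_def)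
    next
      case F1: False
      show ?thesis
      proof (cases "(P,r,False) \<in> W")
        case True then show ?thesis using wit_prop[OF rs True \<open>P' \<in> d P a\<close>] \<open>P' \<in> d P a\<close> F1
          by (simp add: \<sigma>_def strat_def)
      next
        case False
        have "d r a \<noteq> {}" using cpl \<open>r \<in> Q\<close> by (auto simp: complete_BA_def)
        then show ?thesis using F1 False by (simp add: \<sigma>_def strat_def some_in_eq)
      qed
    qed
  qed
  have win: "delayed_win F ps (dup_run \<sigma> t ps as)" if sr: "spoiler_run d s ps as" for ps as
  proof -
    define rs where "rs = dup_run \<sigma> t ps as"
    have ps0: "ps 0 = s" and pstep: "\<And>i. ps (Suc i) \<in> d (ps i) (as i)" using sr by (auto simp: spoiler_run_def)
    have rs0: "rs 0 = t" and rstep: "\<And>i. rs (Suc i) = \<sigma> (rs i) (ps i, as i, ps (Suc i))"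
      by (simp_all add: rs_def)
    define bt where "bt = rec_nat (s \<in> F \<and> t \<notin> F) (\<lambda>i b. (b \<or> ps (Suc i) \<in> F) \<and> rs (Suc i) \<notin> F)"
    have bt0: "bt 0 = (s \<in> F \<and> t \<notin> F)" and btS: "\<And>i. bt (Suc i) = ((bt i \<or> ps (Suc i) \<in> F) \<and> rs (Suc i) \<notin> F)"
      by (simp_all add: bt_def)
    have step1: "rs (Suc i) = wit d F W \<rho> (ps i) (rs i) True (as i) (ps (Suc i))" if "(ps i, rs i, True) \<in> W" for i
      using that pstep[of i] by (simp add: rstep \<sigma>_def strat_def)
    have step0: "rs (Suc i) = wit d F W \<rho> (ps i) (rs i) False (as i) (ps (Suc i))"
      if "(ps i, rs i, True) \<notin> W" "(ps i, rs i, False) \<in> W" for i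
      using that pstep[of i] by (simp add: rstep \<sigma>_def strat_def)
    have inv: "(ps i, rs i, True) \<in> W \<or> (\<not> bt i \<and> (ps i, rs i, False) \<in> W)" for i
    proof (induction i)
      case 0 then show ?case using init by (cases "s \<in> F \<and> t \<notin> F") (auto simp: ps0 rs0 bt0)
    next
      case (Suc i)
      show ?case
      proof (cases "(ps i, rs i, True) \<in> W")
        case True
        from wit_prop[OF rs True pstep[of i]] step1[OF True]
        have "(ps (Suc i), rs (Suc i), rs (Suc i) \<notin> F) \<in> W" by simp
        then show ?thesis by (cases "rs (Suc i) \<in> F") (auto simp: btS)
      next
        case False
        with Suc have nb: "\<not> bt i" and w: "(ps i, rs i, False) \<in> W" by auto
        from wit_prop[OF rs w pstep[of i]] step0[OF False w]
        have "(ps (Suc i), rs (Suc i), bt (Suc i)) \<in> W" using nb by (simp add: btS)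
        then show ?thesis by (cases "bt (Suc i)") auto
      qed
    qed
    show ?thesis unfolding delayed_win_def rs_def[symmetric]
    proof (intro allI impI, rule ccontr)
      fix i assume pi: "ps i \<in> F" and nk: "\<not> (\<exists>k\<ge>i. rs k \<in> F)"
      have bti: "bt (i + j)" for j
      proof (induction j)
        case 0 show ?case
        proof (cases i)
          case 0 then show ?thesis using pi nk ps0 rs0 by (auto simp: bt0)
        next
          case (Suc i') then show ?thesis using pi nk by (auto simp: btS)
        qed
      next
        case (Suc j) then show ?case using nk by (auto simp: btS)
      qed
      have inW: "(ps (i+j), rs (i+j), True) \<in> W" for j using inv[of "i+j"] bti[of j] by auto
      have "\<rho> (ps (i + Suc j), rs (i + Suc j), True) < \<rho> (ps (i+j), rs (i+j), True)" for j
      proof -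
        have "rs (Suc (i+j)) \<notin> F" using nk by auto
        with wit_prop[OF rs inW[of j] pstep[of "i+j"]] step1[OF inW[of j]]
        show ?thesis by simp
      qed
      then show False using no_inf_desc[of "\<lambda>j. \<rho> (ps (i+j), rs (i+j), True)"] by simp
    qed
  qed
  show ?thesis unfolding delayed_sim_def using sQ tQ legal win by blast
qed



definition Ed :: "('q \<Rightarrow> 'a \<Rightarrow> 'q set) \<Rightarrow> 'q set \<Rightarrow> ('q \<Rightarrow> 'q \<times> 'a \<times> 'q \<Rightarrow> 'q) \<Rightarrow> (('q\<times>'q\<times>bool) \<times> ('q\<times>'q\<times>bool)) set" where
  "Ed d F \<sigma> = {((P,U,b),(P',U',b')). \<exists>a. P' \<in> d P a \<and> U' = \<sigma> U (P,a,P') \<and> b' = ((b \<or> P' \<in> F) \<and> U' \<notin> F)}"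

definition Ep :: "('q \<Rightarrow> 'a \<Rightarrow> 'q set) \<Rightarrow> 'q set \<Rightarrow> ('q \<Rightarrow> 'q \<times> 'a \<times> 'q \<Rightarrow> 'q) \<Rightarrow> (('q\<times>'q\<times>bool) \<times> ('q\<times>'q\<times>bool)) set" where
  "Ep d F \<sigma> = {(c,c'). (c,c') \<in> Ed d F \<sigma> \<and> snd (snd c) \<and> snd (snd c')}"

definition wins :: "('q \<Rightarrow> 'a \<Rightarrow> 'q set) \<Rightarrow> 'q set \<Rightarrow> ('q \<Rightarrow> 'q \<times> 'a \<times> 'q \<Rightarrow> 'q) \<Rightarrow> 'q\<times>'q\<times>bool \<Rightarrow> bool" where
  "wins d F \<sigma> c \<longleftrightarrow> (case c of (P,U,b) \<Rightarrow> (b \<longrightarrow> U \<notin> F) \<and>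
     (\<forall>ps as. spoiler_run d P ps as \<longrightarrow> delayed_win F ps (dup_run \<sigma> U ps as) \<and> (b \<longrightarrow> (\<exists>k. dup_run \<sigma> U ps as k \<in> F))))"

lemma dup_run_shift:
  "dup_run \<sigma> U (case_nat P ps) (case_nat a as) (Suc i) = dup_run \<sigma> (\<sigma> U (P, a, ps 0)) ps as i"
  by (induction i) auto

lemma wins_step:
  assumes w: "wins d F \<sigma> c" and e: "(c,c') \<in> Ed d F \<sigma>"
  shows "wins d F \<sigma> c'"
proof -
  obtain P U b where c: "c = (P,U,b)" by (cases c) auto
  obtain P' U' b' where c': "c' = (P',U',b')" by (cases c') auto
  from e obtain a where a: "P' \<in> d P a" "U' = \<sigma> U (P,a,P')" "b' = ((b \<or> P' \<in> F) \<and> U' \<notin> F)"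
    by (auto simp: Ed_def c c')
  from w have bU: "b \<longrightarrow> U \<notin> F" and W: "\<And>ps as. spoiler_run d P ps as \<Longrightarrow> delayed_win F ps (dup_run \<sigma> U ps as) \<and> (b \<longrightarrow> (\<exists>k. dup_run \<sigma> U ps as k \<in> F))"
    by (auto simp: wins_def c)
  show ?thesis unfolding c' wins_def
  proof (simp, intro conjI allI impI)
    show "b' \<Longrightarrow> U' \<notin> F" using a by simp
    fix ps as assume sr: "spoiler_run d P' ps as"
    define ps2 where "ps2 = case_nat P ps"
    define as2 where "as2 = case_nat a as"
    have sr2: "spoiler_run d P ps2 as2" using sr a(1)
      unfolding spoiler_run_def ps2_def as2_def by (auto split: nat.split)
    have rs: "dup_run \<sigma> U ps2 as2 (Suc i) = dup_run \<sigma> U' ps as i" for i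
      using dup_run_shift[of \<sigma> U P ps a as i] sr a(2) by (simp add: ps2_def as2_def spoiler_run_def)
    from W[OF sr2] have dw: "delayed_win F ps2 (dup_run \<sigma> U ps2 as2)" and bk: "b \<longrightarrow> (\<exists>k. dup_run \<sigma> U ps2 as2 k \<in> F)" by auto
    show dwin: "delayed_win F ps (dup_run \<sigma> U' ps as)"
      unfolding delayed_win_def
    proof (intro allI impI)
      fix i assume "ps i \<in> F"
      then have "ps2 (Suc i) \<in> F" by (simp add: ps2_def)
      with dw obtain k where "k \<ge> Suc i" "dup_run \<sigma> U ps2 as2 k \<in> F" unfolding delayed_win_def by blast
      then obtain k' where "k = Suc k'" "k' \<ge> i" by (cases k) auto
      then show "\<exists>k\<ge>i. dup_run \<sigma> U' ps as k \<in> F" using \<open>dup_run \<sigma> U ps2 as2 k \<in> F\<close> rs by auto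
    qed
    assume "b'"
    show "\<exists>k. dup_run \<sigma> U' ps as k \<in> F"
    proof (cases "P' \<in> F")
      case True
      then have "ps 0 \<in> F" using sr by (simp add: spoiler_run_def)
      then show ?thesis using dwin unfolding delayed_win_def by blast
    next
      case False
      with \<open>b'\<close> a(3) have b: b by simp
      with bk obtain k where k: "dup_run \<sigma> U ps2 as2 k \<in> F" by blast
      show ?thesis
      proof (cases k)
        case 0 then show ?thesis using k bU b by simp
      next
        case (Suc k') then show ?thesis using k rs by auto
      qed
    qed
  qed
qed



lemma cycle_chain:
  assumes "(c,c) \<in> E\<^sup>+"
  shows "\<exists>f. f 0 = c \<and> (\<forall>n. (f n, f (Suc n)) \<in> E)"
proof -
  define S where "S = {d. (c,d) \<in> E\<^sup>* \<and> (d,c) \<in> E\<^sup>+}"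
  have cS: "c \<in> S" using assms by (simp add: S_def)
  have succ: "\<exists>e. e \<in> S \<and> (d,e) \<in> E" if "d \<in> S" for d
  proof -
    from that have cd: "(c,d) \<in> E\<^sup>*" and dc: "(d,c) \<in> E\<^sup>+" by (auto simp: S_def)
    from tranclD[OF dc] obtain e where de: "(d,e) \<in> E" and ec: "(e,c) \<in> E\<^sup>*" by blast
    have "(c,e) \<in> E\<^sup>*" using cd de by (rule rtrancl_into_rtrancl)
    moreover have "(e,c) \<in> E\<^sup>+"
    proof (cases "e = c")
      case True then show ?thesis using assms by simp
    next
      case False then show ?thesis using ec by (simp add: rtrancl_eq_or_trancl)
    qed
    ultimately show ?thesis using de by (auto simp: S_def)
  qed
  have "\<exists>f. \<forall>n. (f n \<in> S \<and> (n = 0 \<longrightarrow> f n = c)) \<and> (f n, f (Suc n)) \<in> E"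
    apply (rule dependent_nat_choice)
    using cS succ by auto
  then show ?thesis by blast
qed

lemma lemmaS:
  assumes ba: "is_BA Q d I F" and ds: "(x0,y0) \<in> delayed_sim Q d F"
  shows "\<exists>W \<rho> N. rsim d F W \<rho> \<and> (x0, y0, x0 \<in> F \<and> y0 \<notin> F) \<in> W \<and> (\<forall>c\<in>W. \<rho> c < N)"
proof -
  from ds obtain \<sigma> where x0Q: "x0 \<in> Q" and y0Q: "y0 \<in> Q" and legal: "legal_strategy Q d \<sigma>"
    and win: "\<And>ps as. spoiler_run d x0 ps as \<Longrightarrow> delayed_win F ps (dup_run \<sigma> y0 ps as)"
    unfolding delayed_sim_def by blast
  have dQ: "\<And>P a. P \<in> Q \<Longrightarrow> d P a \<subseteq> Q" using ba by (auto simp: is_BA_def)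
  define ini where "ini = (x0, y0, x0 \<in> F \<and> y0 \<notin> F)"
  define R where "R = (Ed d F \<sigma>)\<^sup>* `` {ini}"
  have RQ: "c \<in> R \<Longrightarrow> c \<in> Q \<times> Q \<times> UNIV" for c
    unfolding R_def
  proof (simp, induction rule: rtrancl_induct)
    case base then show ?case using x0Q y0Q by (simp add: ini_def)
  next
    case (step c c')
    then show ?case using legal dQ unfolding Ed_def legal_strategy_def by (auto; blast)
  qed
  have Rcl: "c \<in> R \<Longrightarrow> (c,c') \<in> Ed d F \<sigma> \<Longrightarrow> c' \<in> R" for c c'
    unfolding R_def by (auto intro: rtrancl_into_rtrancl)
  have Rwins: "c \<in> R \<Longrightarrow> wins d F \<sigma> c" for c
    unfolding R_def
  proof (simp, induction rule: rtrancl_induct)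
    case base
    have "\<forall>ps as. spoiler_run d x0 ps as \<longrightarrow> delayed_win F ps (dup_run \<sigma> y0 ps as) \<and> (x0 \<in> F \<and> y0 \<notin> F \<longrightarrow> (\<exists>k. dup_run \<sigma> y0 ps as k \<in> F))"
    proof (intro allI impI conjI)
      fix ps as assume sr: "spoiler_run d x0 ps as"
      show dw: "delayed_win F ps (dup_run \<sigma> y0 ps as)" by (rule win[OF sr])
      assume "x0 \<in> F \<and> y0 \<notin> F"
      then have "ps 0 \<in> F" using sr by (simp add: spoiler_run_def)
      then show "\<exists>k. dup_run \<sigma> y0 ps as k \<in> F" using dw unfolding delayed_win_def by blast
    qed
    then show ?case unfolding wins_def ini_def by simp
  next
    case (step c c') then show ?case using wins_step by blast
  qed
  let ?E = "Ep d F \<sigma>"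
  have EpR: "c \<in> R \<Longrightarrow> (c,c') \<in> ?E\<^sup>+ \<Longrightarrow> c' \<in> R" for c c'
  proof -
    assume a1: "c \<in> R" and a2: "(c,c') \<in> ?E\<^sup>+"
    from a2 a1 show "c' \<in> R"
      by (induction rule: trancl_induct) (auto simp: Ep_def intro: Rcl)
  qed
  have acyc: "(c,c) \<notin> ?E\<^sup>+" if cR: "c \<in> R" for c
  proof
    assume "(c,c) \<in> ?E\<^sup>+"
    from cycle_chain[OF this] obtain f where f0: "f 0 = c" and fE: "\<And>n. (f n, f (Suc n)) \<in> ?E" by blast
    obtain P U b where c: "c = (P,U,b)" by (cases c) auto
    define ps where "ps n = fst (f n)" for n
    define rs where "rs n = fst (snd (f n))" for n
    define as where "as n = (SOME a. ps (Suc n) \<in> d (ps n) a \<and> rs (Suc n) = \<sigma> (rs n) (ps n, a, ps (Suc n)))" for n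
    have bits: "snd (snd (f n))" for n using fE[of n] by (auto simp: Ep_def)
    have edge: "\<exists>a. ps (Suc n) \<in> d (ps n) a \<and> rs (Suc n) = \<sigma> (rs n) (ps n, a, ps (Suc n))" for n
      using fE[of n] unfolding Ep_def Ed_def ps_def rs_def by (cases "f n"; cases "f (Suc n)") auto
    have asp: "ps (Suc n) \<in> d (ps n) (as n) \<and> rs (Suc n) = \<sigma> (rs n) (ps n, as n, ps (Suc n))" for n
      unfolding as_def using someI_ex[OF edge[of n]] .
    have sr: "spoiler_run d P ps as" using asp f0 c by (simp add: spoiler_run_def ps_def)
    have dr: "dup_run \<sigma> U ps as n = rs n" for n
      by (induction n) (use asp f0 c in \<open>auto simp: rs_def\<close>)
    from Rwins[OF cR] have "b \<longrightarrow> (\<exists>k. dup_run \<sigma> U ps as k \<in> F)" using sr by (auto simp: wins_def c)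
    moreover have b using bits[of 0] f0 c by simp
    ultimately obtain k where "rs k \<in> F" using dr by auto
    moreover have "rs k \<notin> F"
    proof (cases k)
      case 0 then show ?thesis using Rwins[OF cR] f0 c \<open>b\<close> by (simp add: wins_def rs_def)
    next
      case (Suc k') then show ?thesis using fE[of k'] by (cases "f k'"; cases "f k"; auto simp: Ep_def Ed_def rs_def)
    qed
    ultimately show False by simp
  qed
  define \<rho> where "\<rho> c = card (?E\<^sup>+ `` {c})" for c
  have fin: "finite (Q \<times> Q \<times> (UNIV :: bool set))" using ba by (simp add: is_BA_def)
  have sub: "c \<in> R \<Longrightarrow> ?E\<^sup>+ `` {c} \<subseteq> Q \<times> Q \<times> UNIV" for c using EpR RQ by blast
  have rsim: "rsim d F R \<rho>" unfolding rsim_def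
  proof (intro allI impI)
    fix P U b a P' assume cR: "(P,U,b) \<in> R" and P': "P' \<in> d P a"
    define U' where "U' = \<sigma> U (P,a,P')"
    have "U' \<in> d U a" using legal RQ[OF cR] P' unfolding legal_strategy_def U'_def by auto
    moreover have e: "((P,U,b),(P',U',(b \<or> P' \<in> F) \<and> U' \<notin> F)) \<in> Ed d F \<sigma>"
      unfolding Ed_def U'_def using P' by auto
    moreover have "b \<and> U' \<notin> F \<longrightarrow> \<rho> (P',U',True) < \<rho> (P,U,True)"
    proof
      assume bU: "b \<and> U' \<notin> F"
      then have ep: "((P,U,True),(P',U',True)) \<in> ?E" using e by (simp add: Ep_def)
      have c'R: "(P',U',True) \<in> R" using Rcl[OF cR e] bU by simp
      have "?E\<^sup>+ `` {(P',U',True)} \<subset> ?E\<^sup>+ `` {(P,U,True)}"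
      proof
        show "?E\<^sup>+ `` {(P',U',True)} \<subseteq> ?E\<^sup>+ `` {(P,U,True)}" using ep by (auto intro: trancl_into_trancl2)
        show "?E\<^sup>+ `` {(P',U',True)} \<noteq> ?E\<^sup>+ `` {(P,U,True)}" using ep acyc[OF c'R] by auto
      qed
      moreover have "finite (?E\<^sup>+ `` {(P,U,True)})" 
      proof -
        have "(P,U,True) \<in> R" using cR bU by simp
        then show ?thesis using sub[of "(P,U,True)"] fin finite_subset by blast
      qed
      ultimately show "\<rho> (P',U',True) < \<rho> (P,U,True)" unfolding \<rho>_def by (rule psubset_card_mono[rotated])
    qed
    ultimately show "\<exists>U'\<in>d U a. (P', U', (b \<or> P' \<in> F) \<and> U' \<notin> F) \<in> R \<and> (b \<and> U' \<notin> F \<longrightarrow> \<rho> (P', U', True) < \<rho> (P, U, True))"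
      using Rcl[OF cR] by blast
  qed
  have bound: "\<forall>c\<in>R. \<rho> c < Suc (card (Q \<times> Q \<times> (UNIV :: bool set)))"
  proof
    fix c assume "c \<in> R"
    then show "\<rho> c < Suc (card (Q \<times> Q \<times> (UNIV :: bool set)))"
      unfolding \<rho>_def using card_mono[OF fin sub] by (simp add: less_Suc_eq_le)
  qed
  have "ini \<in> R" by (simp add: R_def)
  then show ?thesis using rsim bound unfolding ini_def by blast
qed



lemma rsim_union:
  assumes r1: "rsim d F W1 \<rho>1" and b1: "\<forall>c\<in>W1. \<rho>1 c < N1"
    and r2: "rsim d F W2 \<rho>2" and b2: "\<forall>c\<in>W2. \<rho>2 c < N2"
  shows "rsim d F (W1 \<union> W2) (\<lambda>c. if c \<in> W1 then \<rho>1 c else N1 + \<rho>2 c) \<and> (\<forall>c\<in>W1 \<union> W2. (if c \<in> W1 then \<rho>1 c else N1 + \<rho>2 c) < N1 + N2)"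
proof
  show "\<forall>c\<in>W1 \<union> W2. (if c \<in> W1 then \<rho>1 c else N1 + \<rho>2 c) < N1 + N2" using b1 b2 by auto
  show "rsim d F (W1 \<union> W2) (\<lambda>c. if c \<in> W1 then \<rho>1 c else N1 + \<rho>2 c)"
    unfolding rsim_def
  proof (intro allI impI)
    fix P U b a P' assume c: "(P,U,b) \<in> W1 \<union> W2" and P': "P' \<in> d P a"
    show "\<exists>U'\<in>d U a. (P', U', (b \<or> P' \<in> F) \<and> U' \<notin> F) \<in> W1 \<union> W2 \<and>
             (b \<and> U' \<notin> F \<longrightarrow> (if (P', U', True) \<in> W1 then \<rho>1 (P', U', True) else N1 + \<rho>2 (P', U', True))
                < (if (P, U, True) \<in> W1 then \<rho>1 (P, U, True) else N1 + \<rho>2 (P, U, True)))"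
    proof (cases "(P,U,b) \<in> W1")
      case True
      from r1[unfolded rsim_def, rule_format, OF True P'] obtain U' where
        "U' \<in> d U a" "(P', U', (b \<or> P' \<in> F) \<and> U' \<notin> F) \<in> W1" "b \<and> U' \<notin> F \<longrightarrow> \<rho>1 (P',U',True) < \<rho>1 (P,U,True)"
        by blast
      then show ?thesis using True by (intro bexI[of _ U']) auto
    next
      case False
      then have c2: "(P,U,b) \<in> W2" using c by simp
      from r2[unfolded rsim_def, rule_format, OF c2 P'] obtain U' where
        u: "U' \<in> d U a" "(P', U', (b \<or> P' \<in> F) \<and> U' \<notin> F) \<in> W2" "b \<and> U' \<notin> F \<longrightarrow> \<rho>2 (P',U',True) < \<rho>2 (P,U,True)"
        by blast
      have "b \<and> U' \<notin> F \<longrightarrow> (if (P', U', True) \<in> W1 then \<rho>1 (P', U', True) else N1 + \<rho>2 (P', U', True))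
                < (if (P, U, True) \<in> W1 then \<rho>1 (P, U, True) else N1 + \<rho>2 (P, U, True))"
      proof
        assume bu: "b \<and> U' \<notin> F"
        then have nW1: "(P,U,True) \<notin> W1" using False by simp
        show "(if (P', U', True) \<in> W1 then \<rho>1 (P', U', True) else N1 + \<rho>2 (P', U', True))
                < (if (P, U, True) \<in> W1 then \<rho>1 (P, U, True) else N1 + \<rho>2 (P, U, True))"
          using nW1 b1 u(3) bu by auto
      qed
      then show ?thesis using u by blast
    qed
  qed
qed

primrec stp :: "('q \<Rightarrow> 'a \<Rightarrow> 'q set) \<Rightarrow> 'q set \<Rightarrow> ('q \<times> 'q \<times> bool) set \<Rightarrow> ('q \<times> 'q \<times> bool \<Rightarrow> nat) \<Rightarrow> (nat \<Rightarrow> 'q) \<Rightarrow> (nat \<Rightarrow> bool) \<Rightarrow> 'a \<Rightarrow> 'q \<Rightarrow> nat \<Rightarrow> 'q" where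
  "stp d F W \<rho> x c a P0 0 = P0"
| "stp d F W \<rho> x c a P0 (Suc j) = wit d F W \<rho> (x j) (x (Suc j)) (c j) a (stp d F W \<rho> x c a P0 j)"

definition cb :: "'q set \<Rightarrow> (nat \<Rightarrow> 'q) \<Rightarrow> (nat \<Rightarrow> bool) \<Rightarrow> nat \<Rightarrow> bool" where
  "cb F x' c j = ((c j \<or> x' j \<in> F) \<and> x' (Suc j) \<notin> F)"

definition validch :: "('q \<times> 'q \<times> bool) set \<Rightarrow> nat \<Rightarrow> (nat \<Rightarrow> 'q) \<Rightarrow> (nat \<Rightarrow> bool) \<Rightarrow> bool" where
  "validch W k x c \<longleftrightarrow> (\<forall>j<k. (x j, x (Suc j), c j) \<in> W)"

definition goodtop :: "nat \<Rightarrow> (nat \<Rightarrow> bool) \<Rightarrow> nat \<Rightarrow> bool" where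
  "goodtop k c J \<longleftrightarrow> J < k \<and> c J \<and> (\<forall>j. J < j \<and> j < k \<longrightarrow> \<not> c j)"

definition mch :: "nat \<Rightarrow> ('q \<times> 'q \<times> bool \<Rightarrow> nat) \<Rightarrow> nat \<Rightarrow> (nat \<Rightarrow> 'q) \<Rightarrow> nat \<Rightarrow> nat" where
  "mch N \<rho> k x J = (k - J) * N + \<rho> (x J, x (Suc J), True)"

lemma top_index: "\<exists>j<(k::nat). Pr j \<Longrightarrow> \<exists>J<k. Pr J \<and> (\<forall>j. J < j \<and> j < k \<longrightarrow> \<not> Pr j)"
proof (induction k)
  case 0 then show ?case by simp
next
  case (Suc k)
  show ?case
  proof (cases "Pr k")
    case True then show ?thesis by (intro exI[of _ k]) auto
  next
    case False
    with Suc.prems have "\<exists>j<k. Pr j" using less_Suc_eq by auto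
    from Suc.IH[OF this] obtain J where "J<k" "Pr J" "\<forall>j. J < j \<and> j < k \<longrightarrow> \<not> Pr j" by blast
    then show ?thesis using False less_Suc_eq by (intro exI[of _ J]) auto
  qed
qed

context
  fixes d :: "'q \<Rightarrow> 'a \<Rightarrow> 'q set" and F :: "'q set" and W and \<rho> :: "'q \<times> 'q \<times> bool \<Rightarrow> nat" and N :: nat
  assumes rs: "rsim d F W \<rho>" and bnd: "\<forall>c\<in>W. \<rho> c < N"
begin

lemma stp_in:
  assumes v: "validch W k x c" and P0: "P0 \<in> d (x 0) a"
  shows "j \<le> k \<Longrightarrow> stp d F W \<rho> x c a P0 j \<in> d (x j) a"
proof (induction j)
  case 0 then show ?case using P0 by simp
next
  case (Suc j)
  then have "j < k" by simp
  with v have "(x j, x (Suc j), c j) \<in> W" by (simp add: validch_def)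
  from wit_prop[OF rs this Suc.IH] \<open>j<k\<close> show ?case by simp
qed

lemma stp_valid:
  assumes v: "validch W k x c" and P0: "P0 \<in> d (x 0) a"
  defines "x' \<equiv> stp d F W \<rho> x c a P0"
  shows "validch W k x' (cb F x' c)"
    and "\<And>j. j < k \<Longrightarrow> c j \<Longrightarrow> cb F x' c j \<Longrightarrow> \<rho> (x' j, x' (Suc j), True) < \<rho> (x j, x (Suc j), True)"
proof -
  have w: "(x j, x (Suc j), c j) \<in> W" "x' j \<in> d (x j) a" if "j < k" for j
    using v that stp_in[OF v P0, of j] by (auto simp: validch_def x'_def)
  show "validch W k x' (cb F x' c)"
    unfolding validch_def
  proof (intro allI impI)
    fix j assume "j < k"
    from wit_prop[OF rs w[OF this]] show "(x' j, x' (Suc j), cb F x' c j) \<in> W"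
      by (simp add: x'_def cb_def)
  qed
  fix j assume "j < k" "c j" "cb F x' c j"
  from wit_prop[OF rs w[OF \<open>j<k\<close>]] \<open>c j\<close> \<open>cb F x' c j\<close>
  show "\<rho> (x' j, x' (Suc j), True) < \<rho> (x j, x (Suc j), True)"
    by (simp add: x'_def cb_def)
qed

lemma stp_prop:
  assumes "x' k \<notin> F" "\<exists>j<k. c j \<or> x' j \<in> F"
  shows "\<exists>J<k. cb F x' c J \<and> (\<forall>j. J < j \<and> j < k \<longrightarrow> \<not> (c j \<or> x' j \<in> F))"
proof -
  from top_index[OF assms(2)] obtain J where J: "J < k" "c J \<or> x' J \<in> F" "\<forall>j. J < j \<and> j < k \<longrightarrow> \<not> (c j \<or> x' j \<in> F)"
    by blast
  have "x' (Suc J) \<notin> F"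
  proof (cases "Suc J = k")
    case True then show ?thesis using assms(1) by simp
  next
    case False then show ?thesis using J by auto
  qed
  then show ?thesis using J by (auto simp: cb_def)
qed

lemma stp_meas:
  assumes v: "validch W k x c" and P0: "P0 \<in> d (x 0) a"
    and gt: "goodtop k c J" and nF: "stp d F W \<rho> x c a P0 k \<notin> F"
  defines "x' \<equiv> stp d F W \<rho> x c a P0"
  shows "\<exists>J'. goodtop k (cb F x' c) J' \<and> mch N \<rho> k x' J' < mch N \<rho> k x J"
proof -
  have "\<exists>j<k. c j \<or> x' j \<in> F" using gt by (auto simp: goodtop_def)
  from stp_prop[OF nF[folded x'_def] this] obtain J' where
    J': "J' < k" "cb F x' c J'" "\<forall>j. J' < j \<and> j < k \<longrightarrow> \<not> (c j \<or> x' j \<in> F)" by blast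
  have gt': "goodtop k (cb F x' c) J'" using J' by (auto simp: goodtop_def cb_def)
  have "J \<le> J'" using J' gt by (auto simp: goodtop_def not_less[symmetric])
  have vv: "validch W k x' (cb F x' c)" using stp_valid(1)[OF v P0] by (simp add: x'_def)
  have "mch N \<rho> k x' J' < mch N \<rho> k x J"
  proof (cases "J' = J")
    case True
    have "\<rho> (x' J, x' (Suc J), True) < \<rho> (x J, x (Suc J), True)"
      using stp_valid(2)[OF v P0, of J] gt J' True by (auto simp: goodtop_def x'_def)
    then show ?thesis using True by (simp add: mch_def)
  next
    case False
    with \<open>J \<le> J'\<close> have "J < J'" by simp
    have "(x' J', x' (Suc J'), True) \<in> W" using vv J' by (auto simp: validch_def)
    then have r: "\<rho> (x' J', x' (Suc J'), True) < N" using bnd by auto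
    have "k - J' + 1 \<le> k - J" using \<open>J < J'\<close> J' by simp
    then have "(k - J' + 1) * N \<le> (k - J) * N" by (rule mult_right_mono) simp
    then show ?thesis using r by (simp add: mch_def)
  qed
  then show ?thesis using gt' by blast
qed

end



definition Wp :: "('q \<times> 'q \<times> bool) set \<Rightarrow> ('q \<times> 'q \<times> bool) set" where
  "Wp W = {(P,U,b). \<exists>k x c. validch W k x c \<and> x 0 = P \<and> x k = U \<and> (b \<longrightarrow> (\<exists>j<k. c j))}"

definition rhop :: "('q \<times> 'q \<times> bool) set \<Rightarrow> nat \<Rightarrow> ('q \<times> 'q \<times> bool \<Rightarrow> nat) \<Rightarrow> 'q \<times> 'q \<times> bool \<Rightarrow> nat" where
  "rhop W N \<rho> = (\<lambda>(P,U,b). LEAST m. \<exists>k x c J. validch W k x c \<and> x 0 = P \<and> x k = U \<and> goodtop k c J \<and> m = mch N \<rho> k x J)"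

lemma add_trans_sup: "d U b \<subseteq> add_trans d r a p U b"
  by (auto simp: add_trans_def)

context
  fixes d :: "'q \<Rightarrow> 'a \<Rightarrow> 'q set" and F :: "'q set" and W and \<rho> :: "'q \<times> 'q \<times> bool \<Rightarrow> nat" and N :: nat
    and r p q :: 'q and a :: 'a
  assumes rs: "rsim d F W \<rho>" and bnd: "\<forall>c\<in>W. \<rho> c < N"
    and pqW: "(p, q, p \<in> F \<and> q \<notin> F) \<in> W" and qra: "q \<in> d r a"
begin

lemma next_chain:
  assumes v: "validch W k x c" and x0: "x 0 = P" and xk: "x k = U" and bJ: "b \<longrightarrow> goodtop k c J"
    and P': "P' \<in> add_trans d r a p P a'"
  shows "\<exists>k' y e U'. U' \<in> add_trans d r a p U a' \<and> validch W k' y e \<and> y 0 = P' \<and> y k' = U' \<and>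
     (((b \<or> P' \<in> F) \<and> U' \<notin> F) \<longrightarrow> (\<exists>j<k'. e j)) \<and>
     (b \<and> U' \<notin> F \<longrightarrow> (\<exists>J'. goodtop k' e J' \<and> mch N \<rho> k' y J' < mch N \<rho> k x J))"
proof (cases "P' \<in> d P a'")
  case True
  define x' where "x' = stp d F W \<rho> x c a' P'"
  have P0: "P' \<in> d (x 0) a'" using True x0 by simp
  have U': "x' k \<in> d U a'" using stp_in[OF rs bnd v P0, of k] xk by (simp add: x'_def)
  have vv: "validch W k x' (cb F x' c)" using stp_valid(1)[OF rs bnd v P0] by (simp add: x'_def)
  have pend: "\<exists>j<k. cb F x' c j" if h: "(b \<or> P' \<in> F) \<and> x' k \<notin> F"
  proof -
    have "\<exists>j<k. c j \<or> x' j \<in> F"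
    proof (cases b)
      case True then show ?thesis using bJ by (auto simp: goodtop_def)
    next
      case False
      then have "P' \<in> F" using h by simp
      moreover have "k \<noteq> 0" using h \<open>P' \<in> F\<close> by (cases k) (auto simp: x'_def)
      ultimately show ?thesis by (intro exI[of _ 0]) (auto simp: x'_def)
    qed
    from stp_prop[OF rs bnd _ this] h show ?thesis by blast
  qed
  have meas: "\<exists>J'. goodtop k (cb F x' c) J' \<and> mch N \<rho> k x' J' < mch N \<rho> k x J" if "b" "x' k \<notin> F"
    using stp_meas[OF rs bnd v P0] that bJ by (simp add: x'_def)
  show ?thesis
    apply (rule exI[of _ k], rule exI[of _ x'], rule exI[of _ "cb F x' c"], rule exI[of _ "x' k"])
    using U' add_trans_sup[of d U a' r a p] vv pend meas by (auto simp: x'_def)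
next
  case False
  with P' have Pr: "P = r" "a' = a" "P' = p" by (auto simp: add_trans_def split: if_splits)
  define x' where "x' = stp d F W \<rho> x c a q"
  have P0: "q \<in> d (x 0) a" using qra x0 Pr by simp
  have U': "x' k \<in> d U a" using stp_in[OF rs bnd v P0, of k] xk by (simp add: x'_def)
  have vv: "validch W k x' (cb F x' c)" using stp_valid(1)[OF rs bnd v P0] by (simp add: x'_def)
  define y where "y = case_nat p x'"
  define e where "e = case_nat (p \<in> F \<and> q \<notin> F) (cb F x' c)"
  have vy: "validch W (Suc k) y e"
    unfolding validch_def
  proof (intro allI impI)
    fix j assume "j < Suc k"
    show "(y j, y (Suc j), e j) \<in> W"
    proof (cases j)
      case 0 then show ?thesis using pqW by (simp add: y_def e_def x'_def)
    next
      case (Suc j') then show ?thesis using vv \<open>j < Suc k\<close> by (simp add: y_def e_def validch_def)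
    qed
  qed
  have pend: "\<exists>j<Suc k. e j" if h: "(b \<or> p \<in> F) \<and> x' k \<notin> F"
  proof (cases "p \<in> F \<and> q \<notin> F \<and> \<not> b")
    case True then show ?thesis by (intro exI[of _ 0]) (simp add: e_def)
  next
    case False
    have "\<exists>j<k. c j \<or> x' j \<in> F"
    proof (cases b)
      case True then show ?thesis using bJ by (auto simp: goodtop_def)
    next
      case nb: False
      then have "p \<in> F" "q \<in> F" using h False by auto
      moreover have "k \<noteq> 0" using h \<open>q \<in> F\<close> by (cases k) (auto simp: x'_def)
      ultimately show ?thesis by (intro exI[of _ 0]) (auto simp: x'_def)
    qed
    from stp_prop[OF rs bnd _ this] h obtain J' where "J' < k" "cb F x' c J'" by blast
    then show ?thesis by (intro exI[of _ "Suc J'"]) (simp add: e_def)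
  qed
  have meas: "\<exists>J'. goodtop (Suc k) e J' \<and> mch N \<rho> (Suc k) y J' < mch N \<rho> k x J" if "b" "x' k \<notin> F"
  proof -
    from stp_meas[OF rs bnd v P0] that bJ obtain J' where
      J': "goodtop k (cb F x' c) J'" "mch N \<rho> k x' J' < mch N \<rho> k x J" by (auto simp: x'_def)
    have "goodtop (Suc k) e (Suc J')"
      unfolding goodtop_def
    proof (intro conjI allI impI)
      show "Suc J' < Suc k" using J' by (simp add: goodtop_def)
      show "e (Suc J')" using J' by (simp add: goodtop_def e_def)
      fix j assume "Suc J' < j \<and> j < Suc k"
      then obtain j' where "j = Suc j'" "J' < j'" "j' < k" by (cases j) auto
      then show "\<not> e j" using J' by (simp add: goodtop_def e_def)
    qed
    moreover have "mch N \<rho> (Suc k) y (Suc J') = mch N \<rho> k x' J'" by (simp add: mch_def y_def)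
    ultimately show ?thesis using J' by metis
  qed
  show ?thesis
    apply (rule exI[of _ "Suc k"], rule exI[of _ y], rule exI[of _ e], rule exI[of _ "x' k"])
    using U' add_trans_sup[of d U a' r a p] vy pend meas Pr by (auto simp: y_def)
qed

lemma rsim_Wp: "rsim (add_trans d r a p) F (Wp W) (rhop W N \<rho>)"
  unfolding rsim_def
proof (intro allI impI)
  fix P U b a' P' assume inW: "(P,U,b) \<in> Wp W" and P': "P' \<in> add_trans d r a p P a'"
  from inW obtain k x c where ch: "validch W k x c" "x 0 = P" "x k = U" "b \<longrightarrow> (\<exists>j<k. c j)"
    by (auto simp: Wp_def)
  let ?Pm = "\<lambda>m. \<exists>k x c J. validch W k x c \<and> x 0 = P \<and> x k = U \<and> goodtop k c J \<and> m = mch N \<rho> k x J"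
  obtain k1 x1 c1 J1 where ch1: "validch W k1 x1 c1" "x1 0 = P" "x1 k1 = U" "b \<longrightarrow> goodtop k1 c1 J1"
    and rk: "b \<longrightarrow> rhop W N \<rho> (P,U,True) = mch N \<rho> k1 x1 J1"
  proof (cases b)
    case True
    then have "\<exists>j<k. c j" using ch by simp
    from top_index[OF this] obtain J where "goodtop k c J" by (auto simp: goodtop_def)
    then have "\<exists>m. ?Pm m" using ch by blast
    from LeastI_ex[OF this] obtain k1 x1 c1 J1 where "validch W k1 x1 c1 \<and> x1 0 = P \<and> x1 k1 = U \<and> goodtop k1 c1 J1 \<and> (LEAST m. ?Pm m) = mch N \<rho> k1 x1 J1"
      by blast
    then show ?thesis using that[of k1 x1 c1 J1] by (simp add: rhop_def)
  next
    case False
    then show ?thesis using that[of k x c 0] ch by simp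
  qed
  from next_chain[OF ch1 P'] obtain k' y e U' where
    n: "U' \<in> add_trans d r a p U a'" "validch W k' y e" "y 0 = P'" "y k' = U'"
       "((b \<or> P' \<in> F) \<and> U' \<notin> F) \<longrightarrow> (\<exists>j<k'. e j)"
       "b \<and> U' \<notin> F \<longrightarrow> (\<exists>J'. goodtop k' e J' \<and> mch N \<rho> k' y J' < mch N \<rho> k1 x1 J1)"
    by blast
  have "(P', U', (b \<or> P' \<in> F) \<and> U' \<notin> F) \<in> Wp W" using n unfolding Wp_def by blast
  moreover have "b \<and> U' \<notin> F \<longrightarrow> rhop W N \<rho> (P',U',True) < rhop W N \<rho> (P,U,True)"
  proof
    assume bu: "b \<and> U' \<notin> F"
    with n(6) obtain J' where J': "goodtop k' e J'" "mch N \<rho> k' y J' < mch N \<rho> k1 x1 J1" by blast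
    have "rhop W N \<rho> (P',U',True) \<le> mch N \<rho> k' y J'"
      unfolding rhop_def using n J' by (auto intro!: Least_le)
    then show "rhop W N \<rho> (P',U',True) < rhop W N \<rho> (P,U,True)" using J' rk bu by simp
  qed
  ultimately show "\<exists>U'\<in>add_trans d r a p U a'. (P', U', (b \<or> P' \<in> F) \<and> U' \<notin> F) \<in> Wp W \<and>
          (b \<and> U' \<notin> F \<longrightarrow> rhop W N \<rho> (P', U', True) < rhop W N \<rho> (P, U, True))"
    using n(1) by blast
qed

end

theorem lemma12:
  fixes Q I F :: "'q set" and \<delta> :: "'q \<Rightarrow> 'a::finite \<Rightarrow> 'q set"
    and p q r :: 'q and a :: 'a
  assumes "is_BA Q \<delta> I F" and "complete_BA Q \<delta>"
    and "p \<in> Q" and "q \<in> Q" and "r \<in> Q"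
    and "q \<in> \<delta> r a"
    and "(p, q) \<in> delayed_sim Q \<delta> F"
  shows "delayed_sim Q \<delta> F \<subseteq> delayed_sim Q (add_trans \<delta> r a p) F"
proof
  fix st assume st: "st \<in> delayed_sim Q \<delta> F"
  obtain s t where stp: "st = (s,t)" by (cases st) auto
  have sQ: "s \<in> Q" and tQ: "t \<in> Q" using st stp by (auto simp: delayed_sim_def)
  from lemmaS[OF assms(1) st[unfolded stp]] obtain W1 \<rho>1 N1 where
    w1: "rsim \<delta> F W1 \<rho>1" "(s, t, s \<in> F \<and> t \<notin> F) \<in> W1" "\<forall>c\<in>W1. \<rho>1 c < N1" by blast
  from lemmaS[OF assms(1) assms(7)] obtain W2 \<rho>2 N2 where
    w2: "rsim \<delta> F W2 \<rho>2" "(p, q, p \<in> F \<and> q \<notin> F) \<in> W2" "\<forall>c\<in>W2. \<rho>2 c < N2" by blast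
  define W where "W = W1 \<union> W2"
  define \<rho> where "\<rho> = (\<lambda>c. if c \<in> W1 then \<rho>1 c else N1 + \<rho>2 c)"
  from rsim_union[OF w1(1) w1(3) w2(1) w2(3)] have rw: "rsim \<delta> F W \<rho>" and bw: "\<forall>c\<in>W. \<rho> c < N1 + N2"
    by (simp_all add: W_def \<rho>_def)
  have pqW: "(p, q, p \<in> F \<and> q \<notin> F) \<in> W" using w2 by (simp add: W_def)
  have R: "rsim (add_trans \<delta> r a p) F (Wp W) (rhop W (N1+N2) \<rho>)"
    by (rule rsim_Wp[OF rw bw pqW assms(6)])
  have cpl: "complete_BA Q (add_trans \<delta> r a p)"
    using assms(2) add_trans_sup[of \<delta> _ _ r a p] unfolding complete_BA_def by blast
  have init: "(s, t, s \<in> F \<and> t \<notin> F) \<in> Wp W"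
    unfolding Wp_def
  proof (simp, intro exI conjI)
    show "validch W 1 (\<lambda>j. if j = 0 then s else t) (\<lambda>_. s \<in> F \<and> t \<notin> F)"
      using w1(2) by (simp add: validch_def W_def)
  qed auto
  show "st \<in> delayed_sim Q (add_trans \<delta> r a p) F"
    unfolding stp by (rule lemmaR[OF R cpl sQ tQ init])
qed

end
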